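(* Let $\Delta\in\mathcal{H}_{\ge 3}$ be a hypergraph on $[d]$ and let $F$ be a finite set of atoms of the form $(c_1\not\sim c_2)$ with $c_1\ne c_2\in[d]$. Then there exists a unique hypergraph $\Delta_F$ on $[d]$ that is minimal (with respect to $\le$) among the hypergraphs $\widetilde\Delta$ satisfying: (1) $\Delta\le\widetilde\Delta$; (2) there is no atom $(c_1\not\sim c_2)$ in $F$ and no pair of distinct edges $e_1,e_2\in\widetilde\Delta$ with $\{c_1,c_2\}\subseteq e_1\cap e_2$.
   Context: A hypergraph on the vertex set $[d]$ is a collection $\Delta$ of subsets of $[d]$ (edges) such that no edge is a proper subset of another edge. For hypergraphs $\Delta_1,\Delta_2$, $\Delta_1\le\Delta_2$ means that every edge of $\Delta_1$ is contained in some edge of $\Delta_2$. $\mathcal{H}_{\ge3}$ is the set of hypergraphs all of whose edges have size at least $3$. *)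

theory Defs
  imports Main
begin

definition hypergraph :: "nat \<Rightarrow> nat set set \<Rightarrow> bool" where
  "hypergraph d \<Delta> \<longleftrightarrow>
     (\<forall>e\<in>\<Delta>. e \<subseteq> {1..d}) \<and> (\<forall>e1\<in>\<Delta>. \<forall>e2\<in>\<Delta>. \<not> (e1 \<subset> e2))"

definition hg_le :: "nat set set \<Rightarrow> nat set set \<Rightarrow> bool" where
  "hg_le \<Delta>1 \<Delta>2 \<longleftrightarrow> (\<forall>e1\<in>\<Delta>1. \<exists>e2\<in>\<Delta>2. e1 \<subseteq> e2)"

definition edges_ge3 :: "nat set set \<Rightarrow> bool" where
  "edges_ge3 \<Delta> \<longleftrightarrow> (\<forall>e\<in>\<Delta>. 3 \<le> card e)"

text \<open>An atom (c1 \<noteq>~ c2) is represented by the pair (c1, c2).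
  Condition (2): no atom of F has both vertices in the intersection of two distinct edges.\<close>
definition respects_atoms :: "(nat \<times> nat) set \<Rightarrow> nat set set \<Rightarrow> bool" where
  "respects_atoms F \<Delta>' \<longleftrightarrow>
     \<not> (\<exists>(c1, c2)\<in>F. \<exists>e1\<in>\<Delta>'. \<exists>e2\<in>\<Delta>'. e1 \<noteq> e2 \<and> {c1, c2} \<subseteq> e1 \<inter> e2)"

definition admissible :: "nat \<Rightarrow> nat set set \<Rightarrow> (nat \<times> nat) set \<Rightarrow> nat set set \<Rightarrow> bool" where
  "admissible d \<Delta> F \<Delta>' \<longleftrightarrow> hypergraph d \<Delta>' \<and> hg_le \<Delta> \<Delta>' \<and> respects_atoms F \<Delta>'"

definition minimal_admissible :: "nat \<Rightarrow> nat set set \<Rightarrow> (nat \<times> nat) set \<Rightarrow> nat set set \<Rightarrow> bool" where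
  "minimal_admissible d \<Delta> F \<Delta>F \<longleftrightarrow>
     admissible d \<Delta> F \<Delta>F \<and>
     (\<forall>\<Delta>'. admissible d \<Delta> F \<Delta>' \<and> hg_le \<Delta>' \<Delta>F \<longrightarrow> \<Delta>' = \<Delta>F)"

end

theory Submission
  imports Defs
begin

lemma hg_antisym:
  assumes "hypergraph d G1" "hypergraph d G2" "hg_le G1 G2" "hg_le G2 G1"
  shows "G1 = G2"
proof -
  have *: "e \<in> H2" if h: "hypergraph d H1" "hg_le H1 H2" "hg_le H2 H1" "e \<in> H1" for H1 H2 e
  proof -
    obtain g where g: "g \<in> H2" "e \<subseteq> g" using h unfolding hg_le_def by blast
    obtain e' where e': "e' \<in> H1" "g \<subseteq> e'" using h g unfolding hg_le_def by blast
    have "\<not> e \<subset> e'" using h(1,4) e'(1) unfolding hypergraph_def by blast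
    then have "e = g" using g e' by blast
    then show ?thesis using g by simp
  qed
  show ?thesis using *[of G1 G2] *[of G2 G1] assms by blast
qed

lemma hg_le_trans: "hg_le A B \<Longrightarrow> hg_le B C \<Longrightarrow> hg_le A C"
  unfolding hg_le_def by (meson order_trans)

lemma resp_mono: "respects_atoms F S \<Longrightarrow> M \<subseteq> S \<Longrightarrow> respects_atoms F M"
proof -
  assume r: "respects_atoms F S" and MS: "M \<subseteq> S"
  have "\<forall>p\<in>F. \<forall>e1\<in>M. \<forall>e2\<in>M. e1 \<noteq> e2 \<longrightarrow> \<not> {fst p, snd p} \<subseteq> e1 \<inter> e2"
  proof (intro ballI impI)
    fix p e1 e2 assume "p \<in> F" "e1 \<in> M" "e2 \<in> M" "e1 \<noteq> e2"
    then have "e1 \<in> S" "e2 \<in> S" using MS by auto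
    show "\<not> {fst p, snd p} \<subseteq> e1 \<inter> e2"
    proof
      assume "{fst p, snd p} \<subseteq> e1 \<inter> e2"
      then have "\<exists>(c1, c2)\<in>F. \<exists>e1\<in>S. \<exists>e2\<in>S. e1 \<noteq> e2 \<and> {c1, c2} \<subseteq> e1 \<inter> e2"
        using \<open>p \<in> F\<close> \<open>e1 \<in> S\<close> \<open>e2 \<in> S\<close> \<open>e1 \<noteq> e2\<close>
        by (intro bexI[of _ p]) (auto simp: case_prod_beta)
      then show False using r unfolding respects_atoms_def by simp
    qed
  qed
  then show ?thesis unfolding respects_atoms_def by (auto simp: case_prod_beta)
qed

theorem mainTheorem3:
  fixes d :: nat and \<Delta> :: "nat set set" and F :: "(nat \<times> nat) set"
  assumes "hypergraph d \<Delta>" and "edges_ge3 \<Delta>"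
    and "finite F"
    and "\<forall>(c1, c2)\<in>F. c1 \<noteq> c2 \<and> c1 \<in> {1..d} \<and> c2 \<in> {1..d}"
  shows "\<exists>!\<Delta>F. minimal_admissible d \<Delta> F \<Delta>F"
proof -
  define good where "good A \<longleftrightarrow> (\<forall>\<Gamma>. admissible d \<Delta> F \<Gamma> \<longrightarrow> (\<exists>g\<in>\<Gamma>. A \<subseteq> g))" for A
  define Q where "Q S \<longleftrightarrow> S \<subseteq> Pow {1..d} \<and> hg_le \<Delta> S \<and> (\<forall>A\<in>S. good A)" for S
  have "Q \<Delta>"
  proof -
    have "\<Delta> \<subseteq> Pow {1..d}" using assms(1) unfolding hypergraph_def by blast
    moreover have "hg_le \<Delta> \<Delta>" unfolding hg_le_def by blast
    moreover have "good A" if "A \<in> \<Delta>" for A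
      using that unfolding good_def admissible_def hg_le_def by blast
    ultimately show ?thesis unfolding Q_def by blast
  qed
  then obtain S where QS: "Q S" and Smin: "\<And>S'. Q S' \<Longrightarrow> card S \<le> card S'"
    using ex_has_least_nat[of Q \<Delta> card] by blast
  have finS: "finite S" using QS unfolding Q_def by (meson finite_Pow_iff finite_atLeastAtMost finite_subset)
  have sep: "respects_atoms F S"
  proof (rule ccontr)
    assume "\<not> respects_atoms F S"
    then have "\<exists>(c1, c2)\<in>F. \<exists>e1\<in>S. \<exists>e2\<in>S. e1 \<noteq> e2 \<and> {c1, c2} \<subseteq> e1 \<inter> e2"
      unfolding respects_atoms_def by simp
    then obtain p where p: "p \<in> F" "case p of (c1, c2) \<Rightarrow> \<exists>e1\<in>S. \<exists>e2\<in>S. e1 \<noteq> e2 \<and> {c1, c2} \<subseteq> e1 \<inter> e2"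
      by (rule bexE)
    obtain c1 c2 where pc: "p = (c1, c2)" by (cases p)
    then obtain A B where AB: "A \<in> S" "B \<in> S" "A \<noteq> B" "{c1, c2} \<subseteq> A \<inter> B"
      using p(2) by auto
    have cAB: "(c1,c2) \<in> F" "A \<in> S" "B \<in> S" "A \<noteq> B" "{c1,c2} \<subseteq> A \<inter> B"
      using p(1) AB pc by auto
    define S' where "S' = insert (A \<union> B) (S - {A,B})"
    have "good (A \<union> B)" unfolding good_def
    proof (intro allI impI)
      fix \<Gamma> assume adm: "admissible d \<Delta> F \<Gamma>"
      obtain g where g: "g \<in> \<Gamma>" "A \<subseteq> g" using QS cAB adm unfolding Q_def good_def by blast
      obtain g' where g': "g' \<in> \<Gamma>" "B \<subseteq> g'" using QS cAB adm unfolding Q_def good_def by blast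
      have "g = g'"
      proof (rule ccontr)
        assume neq: "g \<noteq> g'"
        have sub: "{c1,c2} \<subseteq> g \<inter> g'" using cAB g g' by blast
        have ex: "\<exists>(x, y)\<in>F. \<exists>e1\<in>\<Gamma>. \<exists>e2\<in>\<Gamma>. e1 \<noteq> e2 \<and> {x, y} \<subseteq> e1 \<inter> e2"
        proof (rule bexI[of _ "(c1,c2)"])
          show "case (c1,c2) of (x, y) \<Rightarrow> \<exists>e1\<in>\<Gamma>. \<exists>e2\<in>\<Gamma>. e1 \<noteq> e2 \<and> {x, y} \<subseteq> e1 \<inter> e2"
            using sub g(1) g'(1) neq by auto
          show "(c1,c2) \<in> F" by (rule cAB(1))
        qed
        have "respects_atoms F \<Gamma>" using adm by (simp add: admissible_def)
        then show False using ex unfolding respects_atoms_def by simp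
      qed
      then show "\<exists>g\<in>\<Gamma>. A \<union> B \<subseteq> g" using g g' by blast
    qed
    then have "Q S'"
    proof -
      assume gAB: "good (A \<union> B)"
      have Sp: "S \<subseteq> Pow {1..d}" and Sg: "\<forall>X\<in>S. good X" and Sh: "hg_le \<Delta> S"
        using QS unfolding Q_def by auto
      have ABin: "A \<union> B \<in> S'" by (simp add: S'_def)
      have "A \<subseteq> {1..d}" "B \<subseteq> {1..d}" using Sp cAB by auto
      then have "S' \<subseteq> Pow {1..d}" using Sp unfolding S'_def by auto
      moreover have "hg_le \<Delta> S'" unfolding hg_le_def
      proof
        fix e assume "e \<in> \<Delta>"
        then obtain C where C: "C \<in> S" "e \<subseteq> C" using Sh unfolding hg_le_def by blast
        show "\<exists>e2\<in>S'. e \<subseteq> e2"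
        proof (cases "C = A \<or> C = B")
          case True
          then have "e \<subseteq> A \<union> B" using C by auto
          then show ?thesis using ABin by blast
        next
          case False
          then have "C \<in> S'" using C by (simp add: S'_def)
          then show ?thesis using C by blast
        qed
      qed
      moreover have "\<forall>X\<in>S'. good X" using Sg gAB unfolding S'_def by auto
      ultimately show ?thesis unfolding Q_def by blast
    qed
    moreover have "card S' < card S"
    proof -
      have "card S' \<le> Suc (card (S - {A,B}))" unfolding S'_def
        by (rule card_insert_le_m1) auto
      moreover have "card (S - {A,B}) = card S - 2" using cAB finS by (simp add: card_Diff_subset)
      moreover have "card S \<ge> 2"
      proof -
        have "card {A,B} = 2" using cAB by simp
        moreover have "card {A,B} \<le> card S" using cAB finS by (intro card_mono) auto
        ultimately show ?thesis by simp
      qed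
      ultimately show ?thesis by linarith
    qed
    ultimately show False using Smin[of S'] by linarith
  qed
  define M where "M = {A\<in>S. \<forall>B\<in>S. \<not> A \<subset> B}"
  have SM: "hg_le S M" unfolding hg_le_def M_def
  proof
    fix A assume "A \<in> S"
    then obtain m where "m \<in> S" "A \<subseteq> m" "\<forall>b\<in>S. m \<subseteq> b \<longrightarrow> m = b"
      using finite_has_maximal2[OF finS] by blast
    then show "\<exists>e2\<in>{A \<in> S. \<forall>B\<in>S. \<not> A \<subset> B}. A \<subseteq> e2" by blast
  qed
  have MS: "M \<subseteq> S" unfolding M_def by blast
  have admM: "admissible d \<Delta> F M"
    unfolding admissible_def
  proof (intro conjI)
    have "S \<subseteq> Pow {1..d}" using QS unfolding Q_def by blast
    then have "\<forall>e\<in>M. e \<subseteq> {1..d}" using MS by blast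
    moreover have "\<forall>e1\<in>M. \<forall>e2\<in>M. \<not> e1 \<subset> e2" unfolding M_def by blast
    ultimately show "hypergraph d M" unfolding hypergraph_def by blast
    have "hg_le \<Delta> S" using QS unfolding Q_def by blast
    then show "hg_le \<Delta> M" using SM by (rule hg_le_trans)
    show "respects_atoms F M" using sep MS by (rule resp_mono)
  qed
  have least: "hg_le M \<Gamma>" if "admissible d \<Delta> F \<Gamma>" for \<Gamma>
  proof -
    have "\<forall>A\<in>S. good A" using QS unfolding Q_def by blast
    then show ?thesis using that unfolding good_def hg_le_def M_def by blast
  qed
  have hM: "hypergraph d M" using admM unfolding admissible_def by blast
  show ?thesis
  proof (rule ex1I[of _ M])
    show "minimal_admissible d \<Delta> F M" unfolding minimal_admissible_def
      using admM least hg_antisym hM unfolding admissible_def by blast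
  next
    fix G assume "minimal_admissible d \<Delta> F G"
    then show "G = M" using admM least unfolding minimal_admissible_def by blast
  qed
qed

end
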